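(* The edge generating series of the Grand Dyck lattices is $$\sum_{n\ge0}\ell(\mathcal{GD}_n)x^n=\frac{x}{(1-4x)^{3/2}},$$ and for every $n\ge0$, $\ell(\mathcal{GD}_n)=\binom{2n}{n}\frac n2$. Consequently $i(\mathcal{GD}_n)=n/2$ for all $n$.
   Context: Steps: $U=(1,1)$, $D=(1,-1)$. $\mathcal{GD}_n$ is the set of all lattice paths from $(0,0)$ to $(2n,0)$ with steps $U,D$, partially ordered by $\gamma_1\le\gamma_2$ iff $\gamma_1$ lies weakly below $\gamma_2$. For a finite poset $P$, $\ell(P)$ is the number of edges of its Hasse diagram (number of covering pairs) and $i(P)=\ell(P)/|P|$. *)

theory Defs
  imports Complex_Main
begin

text \<open>A lattice path with steps U=(1,1) and D=(1,-1) is encoded as a list of booleans,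
  True = U, False = D. The height after the first k steps:\<close>

definition height :: "bool list \<Rightarrow> nat \<Rightarrow> int" where
  "height p k = sum_list (map (\<lambda>b. if b then 1 else -1) (take k p))"

definition GD :: "nat \<Rightarrow> bool list set" where
  "GD n = {p. length p = 2 * n \<and> height p (2 * n) = 0}"

definition gd_le :: "bool list \<Rightarrow> bool list \<Rightarrow> bool" where
  "gd_le p q \<longleftrightarrow> (\<forall>k \<le> length p. height p k \<le> height q k)"

definition covers :: "'a set \<Rightarrow> ('a \<Rightarrow> 'a \<Rightarrow> bool) \<Rightarrow> 'a \<Rightarrow> 'a \<Rightarrow> bool" where
  "covers P le a b \<longleftrightarrow> a \<in> P \<and> b \<in> P \<and> le a b \<and> a \<noteq> b \<and>
     \<not> (\<exists>c\<in>P. le a c \<and> le c b \<and> c \<noteq> a \<and> c \<noteq> b)"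

definition hasse_edges :: "'a set \<Rightarrow> ('a \<Rightarrow> 'a \<Rightarrow> bool) \<Rightarrow> nat" where
  "hasse_edges P le = card {(a, b). covers P le a b}"

definition hasse_index :: "'a set \<Rightarrow> ('a \<Rightarrow> 'a \<Rightarrow> bool) \<Rightarrow> real" where
  "hasse_index P le = real (hasse_edges P le) / real (card P)"

end

theory Submission imports Defs "HOL-Analysis.Analysis" begin


definition st :: "bool list \<Rightarrow> nat \<Rightarrow> int" where
  "st p k = (if k < length p then (if p!k then 1 else -1) else 0)"

lemma height_0[simp]: "height p 0 = 0"
  by (simp add: height_def)

lemma height_Suc: "height p (Suc k) = height p k + st p k"
proof (cases "k < length p")
  case True
  then show ?thesis by (simp add: height_def st_def take_Suc_conv_app_nth)
next
  case False
  then show ?thesis by (simp add: height_def st_def)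
qed

lemma height_len: "height p (length p) = 2 * int (length (filter id p)) - int (length p)"
proof -
  have "sum_list (map (\<lambda>b. if b then 1 else -1) p) = 2 * int (length (filter id p)) - int (length p)"
    by (induction p) auto
  then show ?thesis by (simp add: height_def)
qed

lemma height_parity: "k \<le> length p \<Longrightarrow> even (height p k + int k)"
proof (induction k)
  case 0 then show ?case by simp
next
  case (Suc k)
  then have "even (height p k + int k)" by simp
  moreover have "st p k = 1 \<or> st p k = -1" using Suc.prems by (auto simp: st_def)
  ultimately show ?case by (auto simp: height_Suc)
qed

lemma height_determ:
  assumes "length p = length q" "\<And>k. k \<le> length p \<Longrightarrow> height p k = height q k"
  shows "p = q"
proof (rule nth_equalityI)
  show "length p = length q" by fact
  fix k assume k: "k < length p"
  have "height p (Suc k) - height p k = height q (Suc k) - height q k"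
    using assms(2) k by simp
  then have "st p k = st q k" by (simp add: height_Suc)
  then show "p ! k = q ! k" using k assms(1) by (auto simp: st_def split: if_splits)
qed

definition flip :: "bool list \<Rightarrow> nat \<Rightarrow> bool list" where
  "flip a i = a[i := True, Suc i := False]"

lemma st_flip:
  assumes "Suc i < length a" "\<not> a!i" "a!(Suc i)"
  shows "st (flip a i) k = st a k + (if k = i then 2 else if k = Suc i then -2 else 0)"
  using assms by (auto simp: st_def flip_def nth_list_update)

lemma height_flip:
  assumes "Suc i < length a" "\<not> a!i" "a!(Suc i)"
  shows "height (flip a i) k = height a k + (if k = Suc i then 2 else 0)"
proof (induction k)
  case 0 then show ?case by simp
next
  case (Suc k)
  then show ?case using st_flip[OF assms, of k] by (auto simp: height_Suc)
qed

lemma length_flip[simp]: "length (flip a i) = length a"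
  by (simp add: flip_def)

lemma GD_iff: "p \<in> GD n \<longleftrightarrow> length p = 2*n \<and> length (filter id p) = n"
proof -
  have "length p = 2*n \<Longrightarrow> height p (2*n) = 0 \<longleftrightarrow> length (filter id p) = n"
    using height_len[of p] by auto
  then show ?thesis by (auto simp: GD_def)
qed

lemma flip_GD:
  assumes "a \<in> GD n" "Suc i < 2*n" "\<not> a!i" "a!(Suc i)"
  shows "flip a i \<in> GD n"
proof -
  have l: "length a = 2*n" using assms(1) by (simp add: GD_def)
  have "height (flip a i) (2*n) = height a (2*n)"
    using height_flip[of i a "2*n"] assms l by simp
  then show ?thesis using assms(1) l by (simp add: GD_def)
qed

lemma cover_flip:
  assumes a: "a \<in> GD n" and i: "Suc i < 2*n" "\<not> a!i" "a!(Suc i)"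
  shows "covers (GD n) gd_le a (flip a i)"
proof -
  have l: "length a = 2*n" using a by (simp add: GD_def)
  note hf = height_flip[of i a, OF _ i(2,3)]
  have le: "gd_le a (flip a i)" using hf i l by (simp add: gd_le_def)
  have ne: "a \<noteq> flip a i"
  proof
    assume "a = flip a i"
    then have "a!i = flip a i ! i" by simp
    then show False using i l by (simp add: flip_def nth_list_update)
  qed
  have nob: "\<not> (\<exists>c\<in>GD n. gd_le a c \<and> gd_le c (flip a i) \<and> c \<noteq> a \<and> c \<noteq> flip a i)"
  proof
    assume "\<exists>c\<in>GD n. gd_le a c \<and> gd_le c (flip a i) \<and> c \<noteq> a \<and> c \<noteq> flip a i"
    then obtain c where c: "c \<in> GD n" "gd_le a c" "gd_le c (flip a i)" "c \<noteq> a" "c \<noteq> flip a i"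
      by blast
    have lc: "length c = 2*n" using c(1) by (simp add: GD_def)
    have lo: "\<And>k. k \<le> 2*n \<Longrightarrow> height a k \<le> height c k" using c(2) l by (simp add: gd_le_def)
    have up: "\<And>k. k \<le> 2*n \<Longrightarrow> height c k \<le> height a k + (if k = Suc i then 2 else 0)"
      using c(3) lc hf i l by (simp add: gd_le_def)
    have other: "\<And>k. k \<le> 2*n \<Longrightarrow> k \<noteq> Suc i \<Longrightarrow> height c k = height a k"
      using lo up by (metis add.right_neutral order_antisym)
    have pa: "even (height a (Suc i) + int (Suc i))" using height_parity[of "Suc i" a] i l by simp
    have pc: "even (height c (Suc i) + int (Suc i))" using height_parity[of "Suc i" c] i lc by simp
    have "height c (Suc i) = height a (Suc i) \<or> height c (Suc i) = height a (Suc i) + 2"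
    proof -
      have "height a (Suc i) \<le> height c (Suc i)" "height c (Suc i) \<le> height a (Suc i) + 2"
        using lo[of "Suc i"] up[of "Suc i"] i by auto
      moreover have "even (height c (Suc i) - height a (Suc i))"
      proof -
        have "height c (Suc i) - height a (Suc i) = (height c (Suc i) + int (Suc i)) - (height a (Suc i) + int (Suc i))" by simp
        then show ?thesis using pa pc by simp
      qed
      ultimately show ?thesis
        by (smt (verit, ccfv_threshold) even_diff odd_one)
    qed
    then show False
    proof
      assume h: "height c (Suc i) = height a (Suc i)"
      have "c = a" by (rule height_determ) (use lc l other h in auto)
      then show False using c(4) by simp
    next
      assume h: "height c (Suc i) = height a (Suc i) + 2"
      have "c = flip a i" by (rule height_determ) (use lc l other h hf i in auto)
      then show False using c(5) by simp
    qed
  qed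
  show ?thesis unfolding covers_def using a flip_GD[OF a i] le ne nob by blast
qed

lemma cover_is_flip:
  assumes cv: "covers (GD n) gd_le a b"
  shows "\<exists>i. Suc i < 2*n \<and> \<not> a!i \<and> a!(Suc i) \<and> b = flip a i"
proof -
  have a: "a \<in> GD n" and b: "b \<in> GD n" and le: "gd_le a b" and ne: "a \<noteq> b"
    and nob: "\<not> (\<exists>c\<in>GD n. gd_le a c \<and> gd_le c b \<and> c \<noteq> a \<and> c \<noteq> b)"
    using cv by (auto simp: covers_def)
  have la: "length a = 2*n" and lb: "length b = 2*n" using a b by (auto simp: GD_def)
  have h0: "height a (2*n) = 0" "height b (2*n) = 0" using a b by (auto simp: GD_def)
  have hle: "\<And>k. k \<le> 2*n \<Longrightarrow> height a k \<le> height b k" using le la by (simp add: gd_le_def)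
  define S where "S = {k. k \<le> 2*n \<and> height a k < height b k}"
  have fS: "finite S" unfolding S_def by simp
  have neS: "S \<noteq> {}"
  proof
    assume "S = {}"
    then have "\<And>k. k \<le> 2*n \<Longrightarrow> height a k = height b k"
      using hle unfolding S_def by (metis (mono_tags, lifting) empty_iff mem_Collect_eq order_less_le)
    then have "a = b" by (intro height_determ) (use la lb in auto)
    then show False using ne by simp
  qed
  define m where "m = Min (height a ` S)"
  have "m \<in> height a ` S" unfolding m_def using fS neS by simp
  then obtain k where kS: "k \<in> S" and hk: "height a k = m" by auto
  have minS: "\<And>j. j \<in> S \<Longrightarrow> height a k \<le> height a j"
    using hk fS unfolding m_def by simp
  have k2n: "k \<le> 2*n" and klt: "height a k < height b k" using kS by (auto simp: S_def)
  have "k \<noteq> 0"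
  proof
    assume "k = 0" then show False using klt by simp
  qed
  then obtain i where ki: "k = Suc i" by (cases k) auto
  have "k \<noteq> 2*n" using klt h0 by auto
  then have i2: "Suc i < 2*n" using k2n ki by simp
  have par: "even (height b k - height a k)"
  proof -
    have "height b k - height a k = (height b k + int k) - (height a k + int k)" by simp
    then show ?thesis using height_parity[of k a] height_parity[of k b] la lb k2n by simp
  qed
  have gap: "height a k + 2 \<le> height b k"
  proof -
    have "height b k - height a k \<noteq> 1" using par by (metis odd_one)
    then show ?thesis using klt by simp
  qed
  have stb: "\<And>j. st b j \<le> 1 \<and> st b j \<ge> -1" by (simp add: st_def)
  have ai: "\<not> a!i"
  proof
    assume ai: "a!i"
    have "st a i = 1" using ai i2 la by (simp add: st_def)
    then have hi: "height a i = height a k - 1" using ki by (simp add: height_Suc)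
    show False
    proof (cases "i \<in> S")
      case True then show False using minS hi by fastforce
    next
      case False
      then have "height a i = height b i" using hle[of i] i2 by (simp add: S_def)
      moreover have "height b k = height b i + st b i" using ki by (simp add: height_Suc)
      ultimately show False using hi gap stb[of i] by simp
    qed
  qed
  have ai1: "a!(Suc i)"
  proof (rule ccontr)
    assume ai: "\<not> a!(Suc i)"
    have "st a k = -1" using ai i2 la ki by (simp add: st_def)
    then have hi: "height a (Suc k) = height a k - 1" by (simp add: height_Suc)
    have sk: "Suc k \<le> 2*n" using i2 ki by simp
    show False
    proof (cases "Suc k \<in> S")
      case True then show False using minS hi by fastforce
    next
      case False
      then have "height a (Suc k) = height b (Suc k)" using hle[of "Suc k"] sk by (simp add: S_def)
      moreover have "height b (Suc k) = height b k + st b k" by (simp add: height_Suc)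
      ultimately show False using hi gap stb[of k] by simp
    qed
  qed
  note hf = height_flip[of i a, OF _ ai ai1]
  let ?c = "flip a i"
  have cG: "?c \<in> GD n" using flip_GD[OF a i2 ai ai1] .
  have "gd_le a ?c" using hf i2 la by (simp add: gd_le_def)
  moreover have "gd_le ?c b" using hf i2 la hle gap ki by (auto simp: gd_le_def)
  moreover have "?c \<noteq> a"
  proof
    assume "?c = a"
    then have "?c!i = a!i" by simp
    then show False using ai i2 la by (simp add: flip_def nth_list_update)
  qed
  ultimately have "?c = b" using nob cG by blast
  then show ?thesis using i2 ai ai1 by blast
qed

definition L :: "nat \<Rightarrow> nat \<Rightarrow> bool list set" where
  "L m k = {q. length q = m \<and> length (filter id q) = k}"

lemma L_finite: "finite (L m k)"
proof -
  have "L m k \<subseteq> {q. set q \<subseteq> UNIV \<and> length q = m}" by (auto simp: L_def)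
  moreover have "finite {q::bool list. set q \<subseteq> UNIV \<and> length q = m}"
    by (rule finite_lists_length_eq) simp
  ultimately show ?thesis by (rule finite_subset)
qed

lemma L_Suc: "L (Suc m) k = (if k = 0 then {} else Cons True ` L m (k - 1)) \<union> Cons False ` L m k"
proof (intro set_eqI iffI)
  fix q assume "q \<in> L (Suc m) k"
  then obtain b r where q: "q = b # r" and "length r = m" "length (filter id q) = k"
    by (cases q) (auto simp: L_def)
  then show "q \<in> (if k = 0 then {} else Cons True ` L m (k - 1)) \<union> Cons False ` L m k"
    by (cases b) (auto simp: L_def)
next
  fix q assume "q \<in> (if k = 0 then {} else Cons True ` L m (k - 1)) \<union> Cons False ` L m k"
  then show "q \<in> L (Suc m) k" by (auto simp: L_def split: if_splits)
qed

lemma card_L: "card (L m k) = m choose k"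
proof (induction m arbitrary: k)
  case 0
  have "L 0 k = (if k = 0 then {[]} else {})" by (auto simp: L_def)
  then show ?case by simp
next
  case (Suc m)
  have d: "(if k = 0 then {} else Cons True ` L m (k - 1)) \<inter> Cons False ` L m k = {}" by auto
  have "card (L (Suc m) k) = card (if k = 0 then {} else Cons True ` L m (k - 1)) + card (Cons False ` L m k)"
    unfolding L_Suc by (rule card_Un_disjoint) (use d L_finite in auto)
  also have "\<dots> = (if k = 0 then 0 else (m choose (k - 1))) + (m choose k)"
    using Suc.IH by (simp add: card_image)
  also have "\<dots> = Suc m choose k"
    by (cases k) auto
  finally show ?case .
qed

lemma card_GD: "card (GD n) = (2*n) choose n"
proof -
  have "GD n = L (2*n) n" by (auto simp: GD_iff L_def)
  then show ?thesis by (simp add: card_L)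
qed

definition ins :: "nat \<Rightarrow> bool list \<Rightarrow> bool list" where
  "ins i q = take i q @ False # True # drop i q"

definition V :: "nat \<Rightarrow> (bool list \<times> nat) set" where
  "V n = {(a, i). a \<in> GD n \<and> Suc i < 2*n \<and> \<not> a!i \<and> a!(Suc i)}"

lemma ins_props:
  assumes "i \<le> length q"
  shows "length (ins i q) = Suc (Suc (length q))"
    "length (filter id (ins i q)) = Suc (length (filter id q))"
    "ins i q ! i = False" "ins i q ! Suc i = True"
    "take i (ins i q) = take i q" "drop (Suc (Suc i)) (ins i q) = drop i q"
proof -
  have lt: "length (take i q) = i" using assms by simp
  show "length (ins i q) = Suc (Suc (length q))" using assms by (simp add: ins_def)
  show "length (filter id (ins i q)) = Suc (length (filter id q))"
  proof -
    have "length (filter id q) = length (filter id (take i q @ drop i q))" by simp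
    then show ?thesis unfolding ins_def by (simp only: filter_append length_append) simp
  qed
  show "ins i q ! i = False" using lt by (simp add: ins_def nth_append)
  show "ins i q ! Suc i = True" using lt by (simp add: ins_def nth_append)
  show "take i (ins i q) = take i q" using lt by (simp add: ins_def)
  show "drop (Suc (Suc i)) (ins i q) = drop i q" using lt by (simp add: ins_def)
qed

lemma ins_inv:
  assumes "Suc i < length a" "\<not> a!i" "a!(Suc i)"
  shows "ins i (take i a @ drop (Suc (Suc i)) a) = a"
proof -
  have "drop i a = a!i # a!(Suc i) # drop (Suc (Suc i)) a"
    using assms(1) by (metis Cons_nth_drop_Suc Suc_lessD)
  then have "a = take i a @ False # True # drop (Suc (Suc i)) a"
    using assms by (metis append_take_drop_id)
  moreover have "take i (take i a @ drop (Suc (Suc i)) a) = take i a" using assms by simp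
  moreover have "drop i (take i a @ drop (Suc (Suc i)) a) = drop (Suc (Suc i)) a" using assms by simp
  ultimately show ?thesis unfolding ins_def by metis
qed

lemma V_Suc: "V (Suc m) = (\<lambda>(q, i). (ins i q, i)) ` (L (2*m) m \<times> {..2*m})"
proof (intro set_eqI iffI)
  fix x assume "x \<in> V (Suc m)"
  then obtain a i where x: "x = (a, i)" and a: "a \<in> GD (Suc m)" and i: "Suc i < 2 * Suc m" "\<not> a!i" "a!(Suc i)"
    by (auto simp: V_def)
  have la: "length a = 2 * Suc m" and fa: "length (filter id a) = Suc m" using a by (auto simp: GD_iff)
  define q where "q = take i a @ drop (Suc (Suc i)) a"
  have e: "ins i q = a" unfolding q_def by (rule ins_inv) (use i la in auto)
  have lq: "length q = 2*m" using la i by (simp add: q_def)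
  have "length (filter id a) = Suc (length (filter id q))" using ins_props(2)[of i q] e lq i by simp
  then have "q \<in> L (2*m) m" using fa lq by (simp add: L_def)
  moreover have "i \<le> 2*m" using i by simp
  ultimately show "x \<in> (\<lambda>(q, i). (ins i q, i)) ` (L (2*m) m \<times> {..2*m})"
    using x e by force
next
  fix x assume "x \<in> (\<lambda>(q, i). (ins i q, i)) ` (L (2*m) m \<times> {..2*m})"
  then obtain q i where x: "x = (ins i q, i)" and q: "q \<in> L (2*m) m" and i: "i \<le> 2*m" by auto
  have lq: "length q = 2*m" and fq: "length (filter id q) = m" using q by (auto simp: L_def)
  note p = ins_props[of i q]
  show "x \<in> V (Suc m)" unfolding x V_def using p lq fq i by (auto simp: GD_iff)
qed

lemma card_V: "card (V n) = (if n = 0 then 0 else (2*n - 1) * ((2*n - 2) choose (n - 1)))"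
proof (cases n)
  case 0
  then have "V n = {}" by (auto simp: V_def)
  then show ?thesis using 0 by simp
next
  case (Suc m)
  have inj: "inj_on (\<lambda>(q, i). (ins i q, i)) (L (2*m) m \<times> {..2*m})"
  proof (rule inj_onI)
    fix x y assume x: "x \<in> L (2*m) m \<times> {..2*m}" and y: "y \<in> L (2*m) m \<times> {..2*m}"
      and xy: "(\<lambda>(q, i). (ins i q, i)) x = (\<lambda>(q, i). (ins i q, i)) y"
    obtain q i where xe: "x = (q, i)" by (cases x)
    obtain r j where ye: "y = (r, j)" by (cases y)
    have q: "q \<in> L (2*m) m" "i \<le> 2*m" "r \<in> L (2*m) m" "j \<le> 2*m" using x y xe ye by auto
    have eq: "ins i q = ins j r" "i = j" using xy xe ye by auto
    have lq: "length q = 2*m" "length r = 2*m" using q by (auto simp: L_def)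
    have "take i q = take i r" using ins_props(5)[of i q] ins_props(5)[of i r] eq lq q by simp
    moreover have "drop i q = drop i r" using ins_props(6)[of i q] ins_props(6)[of i r] eq lq q by simp
    ultimately show "x = y" using xe ye eq by (metis append_take_drop_id)
  qed
  have "card (V n) = card (L (2*m) m \<times> {..2*m})"
    unfolding Suc V_Suc by (rule card_image[OF inj])
  also have "\<dots> = ((2*m) choose m) * (2*m + 1)" by (simp add: card_cartesian_product card_L)
  finally show ?thesis using Suc by simp
qed

lemma covers_set: "{(a, b). covers (GD n) gd_le a b} = (\<lambda>(a, i). (a, flip a i)) ` V n"
proof (intro set_eqI iffI)
  fix x assume "x \<in> {(a, b). covers (GD n) gd_le a b}"
  then obtain a b where x: "x = (a, b)" and c: "covers (GD n) gd_le a b" by auto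
  obtain i where i: "Suc i < 2*n" "\<not> a!i" "a!(Suc i)" "b = flip a i"
    using cover_is_flip[OF c] by blast
  have "a \<in> GD n" using c by (simp add: covers_def)
  then have "(a, i) \<in> V n" using i by (simp add: V_def)
  then show "x \<in> (\<lambda>(a, i). (a, flip a i)) ` V n" using x i by force
next
  fix x assume "x \<in> (\<lambda>(a, i). (a, flip a i)) ` V n"
  then obtain a i where x: "x = (a, flip a i)" and v: "(a, i) \<in> V n" by auto
  then show "x \<in> {(a, b). covers (GD n) gd_le a b}"
    using cover_flip[of a n i] by (auto simp: V_def)
qed

lemma edges_eq: "hasse_edges (GD n) gd_le = card (V n)"
proof -
  have inj: "inj_on (\<lambda>(a, i). (a, flip a i)) (V n)"
  proof (rule inj_onI)
    fix x y assume x: "x \<in> V n" and y: "y \<in> V n"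
      and xy: "(\<lambda>(a, i). (a, flip a i)) x = (\<lambda>(a, i). (a, flip a i)) y"
    obtain a i where xe: "x = (a, i)" by (cases x)
    obtain b j where ye: "y = (b, j)" by (cases y)
    have ab: "a = b" and fe: "flip a i = flip a j" using xy xe ye by auto
    have vi: "a \<in> GD n" "Suc i < 2*n" "\<not> a!i" "a!(Suc i)" using x xe by (auto simp: V_def)
    have la: "length a = 2*n" using vi by (simp add: GD_def)
    have "i = j"
    proof (rule ccontr)
      assume ne: "i \<noteq> j"
      have "flip a i ! i = True" using vi la by (simp add: flip_def nth_list_update)
      moreover have "flip a j ! i = False" using vi la ne by (cases "i = Suc j") (auto simp: flip_def nth_list_update)
      ultimately show False using fe by simp
    qed
    then show "x = y" using xe ye ab by simp
  qed
  show ?thesis unfolding hasse_edges_def covers_set by (rule card_image[OF inj])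
qed



lemma central_rec: "(Suc m) * ((2*Suc m) choose (Suc m)) = 2*(2*m+1) * ((2*m) choose m)"
proof -
  have e1: "Suc (2*m+1) * ((2*m+1) choose m) = ((2*m+2) choose Suc m) * Suc m"
    using Suc_times_binomial_eq[of "2*m+1" m] by simp
  have e2: "Suc (2*m) * ((2*m) choose m) = ((2*m+1) choose Suc m) * Suc m"
    using Suc_times_binomial_eq[of "2*m" m] by simp
  have e3: "((2*m+1) choose Suc m) = ((2*m+1) choose m)"
    using binomial_symmetric[of "Suc m" "2*m+1"] by simp
  have "(Suc m) * ((2*Suc m) choose (Suc m)) = (2*m+2) * ((2*m+1) choose m)"
    using e1 by (simp add: mult.commute)
  also have "\<dots> = 2 * (Suc m * ((2*m+1) choose m))" by simp
  also have "Suc m * ((2*m+1) choose m) = (2*m+1) * ((2*m) choose m)"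
    using e2 e3 by (simp add: mult.commute)
  finally show ?thesis by simp
qed

lemma central_rec_real: "real (Suc m) * real ((2*Suc m) choose (Suc m)) = real (2*(2*m+1)) * real ((2*m) choose m)"
  unfolding of_nat_mult[symmetric] central_rec ..

lemma gch: "((-3/2::real) gchoose m) * (-4)^m = real (2*m+1) * real ((2*m) choose m)"
proof (induction m)
  case 0 then show ?case by simp
next
  case (Suc m)
  have r: "real (Suc m) * ((-3/2::real) gchoose Suc m) = (-3/2 - real m) * ((-3/2::real) gchoose m)"
    using gbinomial_mult_1[of "-3/2::real" m] by (simp add: algebra_simps)
  have c: "real (Suc m) * real ((2*Suc m) choose (Suc m)) = 2*(2*m+1) * real ((2*m) choose m)"
    using central_rec_real[of m] by (simp only: of_nat_mult of_nat_numeral)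
  have "real (Suc m) * (((-3/2::real) gchoose Suc m) * (-4)^Suc m)
      = (-3/2 - real m) * (-4) * (((-3/2::real) gchoose m) * (-4)^m)"
  proof -
    have "real (Suc m) * (((-3/2::real) gchoose Suc m) * (-4)^Suc m) = (real (Suc m) * ((-3/2::real) gchoose Suc m)) * (-4)^Suc m"
      by (simp only: ac_simps)
    also have "\<dots> = (-3/2 - real m) * (-4) * (((-3/2::real) gchoose m) * (-4)^m)"
      unfolding r by (simp only: power_Suc ac_simps)
    finally show ?thesis .
  qed
  also have "\<dots> = (6 + 4*real m) * (real (2*m+1) * real ((2*m) choose m))"
    using Suc.IH by (simp add: algebra_simps)
  also have "\<dots> = real (2*Suc m+1) * (real (2*(2*m+1)) * real ((2*m) choose m))"
    by (simp add: algebra_simps)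
  also have "\<dots> = real (2*Suc m+1) * (real (Suc m) * real ((2*Suc m) choose Suc m))"
    by (simp only: central_rec_real)
  also have "\<dots> = real (Suc m) * (real (2*Suc m+1) * real ((2*Suc m) choose Suc m))"
    by (simp only: ac_simps)
  finally show ?case by (metis mult_cancel_left of_nat_eq_0_iff nat.distinct(1))
qed

lemma series_part:
  fixes E :: "nat \<Rightarrow> real"
  assumes E: "\<And>n. E n = real ((2 * n) choose n) * real n / 2"
  shows "\<forall>x::real. \<bar>x\<bar> < 1/4 \<longrightarrow> (\<lambda>n. E n * x ^ n) sums (x / (1 - 4 * x) powr (3/2))"
proof (intro allI impI)
  fix x :: real assume x: "\<bar>x\<bar> < 1/4"
  have "\<bar>-4*x\<bar> < 1" using x by simp
  from gen_binomial_real[OF this, of "-3/2"]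
  have s: "(\<lambda>n. ((-3/2) gchoose n) * (-4*x)^n) sums (1 - 4*x) powr (-3/2)" by simp
  have "(\<lambda>n. x * (((-3/2) gchoose n) * (-4*x)^n)) sums (x * (1 - 4*x) powr (-3/2))"
    by (rule sums_mult[OF s])
  moreover have EQ: "\<And>n. x * (((-3/2) gchoose n) * (-4*x)^n) = E (Suc n) * x ^ Suc n"
  proof -
    fix n
    have "x * (((-3/2) gchoose n) * (-4*x)^n) = x * x^n * (((-3/2::real) gchoose n) * (-4)^n)"
      using power_mult_distrib[of "-4::real" x n] by (simp only: ac_simps)
    also have "\<dots> = x * x^n * (real (2*n+1) * real ((2*n) choose n))" by (simp only: gch)
    also have "\<dots> = E (Suc n) * x ^ Suc n"
      using central_rec_real[of n] unfolding E by (simp add: algebra_simps)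
    finally show "x * (((-3/2) gchoose n) * (-4*x)^n) = E (Suc n) * x ^ Suc n" .
  qed
  moreover have "(\<lambda>n. x * (((-3/2) gchoose n) * (-4*x)^n)) = (\<lambda>n. E (Suc n) * x ^ Suc n)"
    by (intro ext EQ)
  ultimately have "(\<lambda>n. E (Suc n) * x ^ Suc n) sums (x * (1 - 4*x) powr (-3/2))" by (simp only:)
  hence "(\<lambda>n. E n * x ^ n) sums (x * (1 - 4*x) powr (-3/2) + E 0 * x^0)"
    by (subst sums_Suc_iff[symmetric]) simp
  moreover have "x * (1 - 4*x) powr (-3/2) = x / (1 - 4 * x) powr (3/2)"
    by (simp add: powr_minus_divide)
  ultimately show "(\<lambda>n. E n * x ^ n) sums (x / (1 - 4 * x) powr (3/2))" by (simp add: E)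
qed

lemma edges_formula: "real (hasse_edges (GD n) gd_le) = real ((2 * n) choose n) * real n / 2"
proof (cases n)
  case 0 then show ?thesis by (simp add: edges_eq card_V)
next
  case (Suc m)
  have "real (hasse_edges (GD n) gd_le) = real (2*m+1) * real ((2*m) choose m)"
    using Suc by (simp add: edges_eq card_V algebra_simps)
  also have "\<dots> = real (2*(2*m+1)) * real ((2*m) choose m) / 2" by simp
  also have "\<dots> = real (Suc m) * real ((2*Suc m) choose (Suc m)) / 2"
    by (simp only: central_rec_real)
  finally show ?thesis using Suc by simp
qed

theorem mainTheorem5:
  shows "(\<forall>x::real. \<bar>x\<bar> < 1/4 \<longrightarrow>
            (\<lambda>n. real (hasse_edges (GD n) gd_le) * x ^ n) sums (x / (1 - 4 * x) powr (3/2)))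
       \<and> (\<forall>n. real (hasse_edges (GD n) gd_le) = real ((2 * n) choose n) * real n / 2)
       \<and> (\<forall>n. hasse_index (GD n) gd_le = real n / 2)"
proof (intro conjI)
  show "\<forall>x::real. \<bar>x\<bar> < 1/4 \<longrightarrow>
            (\<lambda>n. real (hasse_edges (GD n) gd_le) * x ^ n) sums (x / (1 - 4 * x) powr (3/2))"
    using series_part[of "\<lambda>n. real (hasse_edges (GD n) gd_le)", OF edges_formula] by simp
  show "\<forall>n. real (hasse_edges (GD n) gd_le) = real ((2 * n) choose n) * real n / 2"
    using edges_formula by blast
  show "\<forall>n. hasse_index (GD n) gd_le = real n / 2"
  proof
    fix n
    have pos: "real ((2 * n) choose n) > 0" by simp
    show "hasse_index (GD n) gd_le = real n / 2"
      unfolding hasse_index_def edges_formula card_GD using pos by simp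
  qed
qed

end
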